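(* Let $R\ge1$, $0\le m<2^R$, $\mu$ a partition of $m$, and $\lambda$ a $2^R$-parent of $\mu$ with affected hook-length $h=h^\lambda_\mu$. Then, modulo $2$, \[ \eta^\lambda_\mu\equiv N_\lambda(h)-\mathbb{I}_{H(\lambda)}(h-2^{R-1})+\mathbb{I}_{H(\lambda)}(h+2^{R-1})+\mathbb{I}_{H(\lambda)}(h-3\cdot2^{R-1}). \]
   Context: $\mathrm{Od}(N)=\pm1$ according as the odd part of $N\ge1$ is $\equiv1$ or $\equiv3\pmod4$. For a partition $\lambda=(\lambda_1\ge\dots\ge\lambda_k>0)$, $H(\lambda):=\{\lambda_i+k-i\}$; $X^{+r}:=\{x+r:x\in X\}\cup\{0,\dots,r-1\}$. A partition $\lambda$ of $2^R+m$ is a $2^R$-parent of $\mu\vdash m$ ($m<2^R$) if there is $h\in H(\lambda)$, $h\ge2^R$, $h-2^R\notin H(\lambda)$, with $(H(\lambda)\cup\{h-2^R\})\setminus\{h\}=H(\mu)^{+r}$ for some $r\ge0$ (i.e. $\mu$ is obtained by removing a $2^R$ rim hook); this unique $h$ is the affected hook-length $h^\lambda_\mu$. $\eta^\lambda_\mu\in\mathbb{Z}/2$ is defined by $(-1)^{\eta^\lambda_\mu}=\prod_{x\in H(\lambda),x\ne h}\mathrm{Od}(|h-x|)/\mathrm{Od}(|h-2^R-x|)$. $N_\lambda(h):=\#\{y\in H(\lambda):h-2^R<y<h\}$, and $\mathbb{I}_X(x)=1$ if $x\in X$, $0$ otherwise. *)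

theory Defs
  imports Complex_Main "HOL-Computational_Algebra.Primes" "HOL-Number_Theory.Cong"
begin

(* Od(N) = 1 if the odd part of N is 1 mod 4, -1 if it is 3 mod 4 (meaningful for N >= 1) *)
definition odd_part :: "nat \<Rightarrow> nat" where
  "odd_part N = N div 2 ^ multiplicity (2::nat) N"

definition Od :: "nat \<Rightarrow> rat" where
  "Od N = (if odd_part N mod 4 = 1 then 1 else -1)"

definition is_partition :: "nat list \<Rightarrow> nat \<Rightarrow> bool" where
  "is_partition lam n \<longleftrightarrow> sorted (rev lam) \<and> 0 \<notin> set lam \<and> sum_list lam = n"

(* H(lambda) = { lambda_i + k - i : 1 <= i <= k }, with 0-based list index j = i - 1 *)
definition Hset :: "nat list \<Rightarrow> nat set" where
  "Hset lam = {lam ! j + length lam - 1 - j | j. j < length lam}"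

definition shift_set :: "nat set \<Rightarrow> nat \<Rightarrow> nat set" where
  "shift_set X r = (\<lambda>x. x + r) ` X \<union> {0..<r}"

(* lambda (a partition of 2^R + m) is a 2^R-parent of mu (a partition of m, m < 2^R),
   with affected hook length h *)
definition parent_with_hook :: "nat \<Rightarrow> nat list \<Rightarrow> nat list \<Rightarrow> nat \<Rightarrow> bool" where
  "parent_with_hook R lam mu h \<longleftrightarrow>
     h \<in> Hset lam \<and> h \<ge> 2 ^ R \<and> h - 2 ^ R \<notin> Hset lam \<and>
     (\<exists>r. (Hset lam \<union> {h - 2 ^ R}) - {h} = shift_set (Hset mu) r)"

definition eta_prod :: "nat \<Rightarrow> nat list \<Rightarrow> nat \<Rightarrow> rat" where
  "eta_prod R lam h = (\<Prod>x\<in>Hset lam - {h}.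
      Od (nat \<bar>int h - int x\<bar>) / Od (nat \<bar>int h - 2 ^ R - int x\<bar>))"

definition eta :: "nat \<Rightarrow> nat list \<Rightarrow> nat \<Rightarrow> int" where
  "eta R lam h = (if eta_prod R lam h = 1 then 0 else 1)"

definition N_count :: "nat \<Rightarrow> nat list \<Rightarrow> nat \<Rightarrow> int" where
  "N_count R lam h = int (card {y \<in> Hset lam. int h - 2 ^ R < int y \<and> y < h})"

definition Ind :: "nat set \<Rightarrow> int \<Rightarrow> int" where
  "Ind X x = (if x \<in> int ` X then 1 else 0)"

end

theory Submission
  imports Defs
begin

lemma mult2_pow: "odd (q::nat) \<Longrightarrow> multiplicity (2::nat) (2^k * q) = k"
proof (induction k)
  case 0 then show ?case by (subst multiplicity_eq_zero_iff) (auto simp: odd_pos)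
next
  case (Suc k)
  have "multiplicity (2::nat) (2 * (2^k*q)) = Suc (multiplicity 2 (2^k*q))"
    by (rule multiplicity_times_same) (use Suc in \<open>auto simp: odd_pos\<close>)
  then show ?case using Suc by (simp add: mult.assoc)
qed

lemma Od_char: "odd (q::nat) \<Longrightarrow> Od (2^k * q) = (if q mod 4 = 1 then 1 else -1)"
  by (simp add: Od_def odd_part_def mult2_pow)

definition chi :: "int \<Rightarrow> rat" where "chi w = (if w mod 4 = 1 then 1 else -1)"

lemma Od_signed:
  assumes "odd (w::int)"
  shows "Od (nat \<bar>2^v * w\<bar>) = (if w > 0 then chi w else - chi w)"
proof (cases "w > 0")
  case True
  have "nat \<bar>2^v * w\<bar> = 2^v * nat w" using True by (simp add: abs_mult nat_mult_distrib nat_power_eq)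
  moreover have "odd (nat w)" using assms True by (simp add: even_nat_iff)
  moreover have "nat w mod 4 = 1 \<longleftrightarrow> w mod 4 = 1" 
  proof -
    have "int (nat w mod 4) = w mod 4" using True by (simp add: zmod_int)
    then show ?thesis by linarith
  qed
  ultimately show ?thesis using True by (simp add: Od_char chi_def)
next
  case False
  then have wn: "w < 0" using assms by (cases "w = 0") auto
  have "nat \<bar>2^v * w\<bar> = nat (2^v * (-w))" using wn by (simp add: abs_mult)
  also have "\<dots> = nat (2^v) * nat (-w)" by (rule nat_mult_distrib) simp
  also have "\<dots> = 2^v * nat (-w)" by (simp add: nat_power_eq)
  finally have "nat \<bar>2^v * w\<bar> = 2^v * nat (-w)" .
  moreover have "odd (nat (-w))" using assms wn by (simp add: even_nat_iff)
  moreover have "nat (-w) mod 4 = 1 \<longleftrightarrow> \<not> w mod 4 = 1"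
  proof -
    have "int (nat (-w) mod 4) = (-w) mod 4" using wn by (simp add: zmod_int)
    moreover have "(-w) mod 4 = 1 \<longleftrightarrow> \<not> w mod 4 = 1" using assms by presburger
    ultimately show ?thesis by linarith
  qed
  ultimately show ?thesis using wn by (simp add: Od_char chi_def)
qed

lemma decomp: assumes "(d::int) \<noteq> 0" shows "\<exists>v w. odd w \<and> d = 2^v * w"
proof -
  obtain y where "d = 2^multiplicity 2 d * y" "\<not> 2 dvd y" using multiplicity_decompose'[of d 2] assms by auto
  then show ?thesis by blast
qed

lemma chi_sq: "chi w * chi w = 1" by (simp add: chi_def)

lemma chi_shift4: "odd w \<Longrightarrow> chi (w - 4 * b) = chi w"
  unfolding chi_def by (simp add: mod_diff_eq[symmetric])

lemma chi_shift2: assumes "odd w" shows "chi (w - 2) = - chi w"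
proof -
  have "w mod 4 = 1 \<or> w mod 4 = 3" using assms by presburger
  moreover have "(w - 2) mod 4 = 1 \<longleftrightarrow> w mod 4 = 3" by presburger
  ultimately show ?thesis unfolding chi_def by auto
qed

lemma sgn_aux:
  fixes w K :: int and c e :: rat assumes "K > 0" "w \<noteq> K"
  shows "(if 0<w then c else -c) * (if 0<w-K then e else -e) = (if 0<w \<and> w<K then -1 else 1) * (c*e)"
  using assms by (cases "0<w"; cases "0<w-K") auto

lemma key:
  fixes d :: int and R :: nat
  assumes R: "R \<ge> 1" and d0: "d \<noteq> 0" and dn: "d \<noteq> 2^R" and lo: "-(2^R) < d" and hi: "d < 2*2^R"
  shows "Od (nat \<bar>d\<bar>) * Od (nat \<bar>d - 2^R\<bar>) =
    (if 0 < d \<and> d < 2^R then -1 else 1) *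
    (if d = 2^(R-1) \<or> d = -(2^(R-1)) \<or> d = 3*2^(R-1) then -1 else 1)"
proof -
  obtain v w where w: "odd w" and dvw: "d = 2^v * w" using decomp[OF d0] by blast
  define a :: int where "a = 2^v"
  have a0: "a > 0" by (simp add: a_def)
  show ?thesis
  proof (cases "v < R")
    case False
    define j :: int where "j = 2^(v-R) * w"
    define P :: int where "P = 2^R"
    have P0: "P > 0" by (simp add: P_def)
    have dj: "d = P * j" using False by (simp add: dvw j_def P_def power_add[symmetric])
    have "j \<noteq> 0" using d0 dj by auto
    moreover have "j \<noteq> 1" using dn dj P_def by auto
    moreover have "j > -1"
    proof (rule ccontr)
      assume "\<not> j > -1" then have "j \<le> -1" by simp
      then have "P * j \<le> P * (-1)" using P0 by (intro mult_left_mono) auto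
      then show False using lo dj P_def by simp
    qed
    moreover have "j < 2"
    proof (rule ccontr)
      assume "\<not> j < 2" then have "j \<ge> 2" by simp
      then have "P * 2 \<le> P * j" using P0 by (intro mult_left_mono) auto
      then show False using hi dj P_def by simp
    qed
    ultimately show ?thesis by simp
  next
    case True
    define k where "k = R - v"
    have k1: "k \<ge> 1" using True by (simp add: k_def)
    have PR: "(2::int)^R = a * 2^k" using True by (simp add: a_def k_def power_add[symmetric])
    have d2: "d - 2^R = 2^v * (w - 2^k)" using PR dvw a_def by (simp add: algebra_simps)
    have w2: "odd (w - 2^k)" using w k1 by simp
    have O1: "Od (nat \<bar>d\<bar>) = (if w > 0 then chi w else - chi w)" using Od_signed[OF w] dvw by simp
    have O2: "Od (nat \<bar>d - 2^R\<bar>) = (if w - 2^k > 0 then chi (w - 2^k) else - chi (w - 2^k))"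
      using Od_signed[OF w2] d2 by simp
    have s1: "0 < d \<longleftrightarrow> w > 0" using dvw a0 a_def by (simp add: zero_less_mult_iff)
    have s2: "d < 2^R \<longleftrightarrow> w < 2^k" using dvw a0 a_def PR by simp
    have s3: "w \<noteq> 2^k" using dn dvw a_def PR by auto
    show ?thesis
    proof (cases "k = 1")
      case True
      have h: "(2::int)^(R-1) = a" using \<open>v < R\<close> True k_def a_def by simp
      have PR2: "(2::int)^R = 2 * a" using PR True by simp
      have "-2 < w"
      proof (rule ccontr)
        assume "\<not> -2 < w" then have "w \<le> -2" by simp
        then have "a * w \<le> a * (-2)" using a0 by (intro mult_left_mono) auto
        then show False using lo dvw a_def PR2 by simp
      qed
      moreover have "w < 4"
      proof (rule ccontr)
        assume "\<not> w < 4" then have "w \<ge> 4" by simp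
        then have "a * 4 \<le> a * w" using a0 by (intro mult_left_mono) auto
        then show False using hi dvw a_def PR2 by simp
      qed
      ultimately have "w = -1 \<or> w = 1 \<or> w = 3" using w by presburger
      then have cond: "d = 2^(R-1) \<or> d = -(2^(R-1)) \<or> d = 3*2^(R-1)" using h dvw a_def by auto
      have c2: "chi (w - 2^k) = - chi w" using True chi_shift2[OF w] by simp
      have e1: "(if 0 < d \<and> d < 2^R then -1 else 1) = (if w > 0 \<and> w < 2^k then -1 else (1::rat))"
        using s1 s2 by simp
      have e2: "(if d = 2^(R-1) \<or> d = -(2^(R-1)) \<or> d = 3*2^(R-1) then -1 else 1) = (-1::rat)"
        using cond by simp
      have "Od (nat \<bar>d\<bar>) * Od (nat \<bar>d - 2^R\<bar>) = (if w > 0 then chi w else - chi w) * (if w - 2^k > 0 then chi (w - 2^k) else - chi (w - 2^k))"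
        using O1 O2 by simp
      also have "\<dots> = (if w > 0 \<and> w < 2^k then -1 else 1) * (chi w * chi (w - 2^k))"
        by (rule sgn_aux) (use s3 in auto)
      also have "\<dots> = (if w > 0 \<and> w < 2^k then -1 else 1) * (-1)" using c2 chi_sq[of w] by simp
      finally show ?thesis unfolding e1 e2 .
    next
      case False
      define b :: int where "b = 2^(k-2)"
      have b0: "b > 0" by (simp add: b_def)
      obtain j where kj: "k = Suc (Suc j)" using False k1
        by (metis One_nat_def Suc_pred le_neq_implies_less less_one not_gr0 not_less_eq)
      have kb: "(2::int)^k = 4 * b" by (simp add: b_def kj)
      have h: "(2::int)^(R-1) = a * (2*b)"
      proof -
        have "(2::int)^R = 2 * 2^(R-1)" using R by (metis Suc_diff_1 less_le_trans zero_less_one power_Suc)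
        then show ?thesis using PR kb by simp
      qed
      have ncond: "\<not> (d = 2^(R-1) \<or> d = -(2^(R-1)) \<or> d = 3*2^(R-1))"
      proof
        assume "d = 2^(R-1) \<or> d = -(2^(R-1)) \<or> d = 3*2^(R-1)"
        then have "a * w = a * (2*b) \<or> a * w = a * (-2*b) \<or> a * w = a * (6*b)"
          using h dvw a_def by (auto simp: algebra_simps)
        then have "a * (w - 2*b) = 0 \<or> a * (w + 2*b) = 0 \<or> a * (w - 6*b) = 0"
          by (auto simp: algebra_simps)
        then have "w - 2*b = 0 \<or> w + 2*b = 0 \<or> w - 6*b = 0" using a0 by auto
        then show False using w by presburger
      qed
      have c2: "chi (w - 2^k) = chi w" using kb chi_shift4[OF w] by simp
      have e2: "(if d = 2^(R-1) \<or> d = -(2^(R-1)) \<or> d = 3*2^(R-1) then -1 else 1) = (1::rat)"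
        using ncond by (simp only: if_False)
      have e1: "(if 0 < d \<and> d < 2^R then -1 else 1) = (if w > 0 \<and> w < 2^k then -1 else (1::rat))"
        using s1 s2 by simp
      have "Od (nat \<bar>d\<bar>) * Od (nat \<bar>d - 2^R\<bar>) = (if w > 0 then chi w else - chi w) * (if w - 2^k > 0 then chi (w - 2^k) else - chi (w - 2^k))"
        using O1 O2 by simp
      also have "\<dots> = (if w > 0 \<and> w < 2^k then -1 else 1) * (chi w * chi (w - 2^k))"
        by (rule sgn_aux) (use s3 in auto)
      also have "\<dots> = (if w > 0 \<and> w < 2^k then -1 else 1) * 1" using c2 chi_sq[of w] by simp
      finally show ?thesis unfolding e1 e2 .
    qed
  qed
qed

lemma len_le_sum: "0 \<notin> set xs \<Longrightarrow> length xs \<le> sum_list (xs::nat list)"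
  by (induction xs) auto

lemma Hbound:
  assumes "is_partition lam N" "x \<in> Hset lam"
  shows "x \<le> N"
proof -
  obtain j where j: "j < length lam" and x: "x = lam ! j + length lam - 1 - j"
    using assms(2) unfolding Hset_def by blast
  have z: "0 \<notin> set lam" and s: "sum_list lam = N" using assms(1) unfolding is_partition_def by auto
  have dec: "lam = take j lam @ lam ! j # drop (Suc j) lam" using j by (simp add: id_take_nth_drop)
  have "sum_list lam = sum_list (take j lam) + lam ! j + sum_list (drop (Suc j) lam)"
    by (subst dec) simp
  moreover have "length (take j lam) \<le> sum_list (take j lam)"
    using z by (intro len_le_sum) (meson in_set_takeD)
  moreover have "length (drop (Suc j) lam) \<le> sum_list (drop (Suc j) lam)"
    using z by (intro len_le_sum) (meson in_set_dropD)
  ultimately show ?thesis using j x s by simp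
qed

lemma prod_pm:
  assumes "finite S" "\<forall>x\<in>S. f x = (1::rat) \<or> f x = -1"
  shows "prod f S = (-1) ^ card {x\<in>S. f x = -1}"
  using assms
proof (induction S rule: finite_induct)
  case empty then show ?case by simp
next
  case (insert a S)
  have fin: "finite {x\<in>S. f x = -1}" using insert by simp
  show ?case
  proof (cases "f a = -1")
    case True
    then have "{x\<in>insert a S. f x = -1} = insert a {x\<in>S. f x = -1}" by auto
    then show ?thesis using insert True fin by simp
  next
    case False
    then have "f a = 1" using insert by auto
    moreover have "{x\<in>insert a S. f x = -1} = {x\<in>S. f x = -1}" using False by auto
    ultimately show ?thesis using insert by simp
  qed
qed

lemma card_filter_sum: "finite S \<Longrightarrow> card {x\<in>S. P x} = (\<Sum>x\<in>S. if P x then 1 else 0)"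
  by (simp add: sum.inter_filter[symmetric])

lemma card_xor:
  assumes "finite S"
  shows "card {x\<in>S. A x \<noteq> B x} + 2 * card {x\<in>S. A x \<and> B x} = card {x\<in>S. A x} + card {x\<in>S. B x}"
proof -
  have "card {x\<in>S. A x \<noteq> B x} + 2 * card {x\<in>S. A x \<and> B x} =
     (\<Sum>x\<in>S. (if A x \<noteq> B x then 1 else 0) + 2 * (if A x \<and> B x then 1 else 0))"
    using assms by (simp add: card_filter_sum sum.distrib sum_distrib_left)
  also have "\<dots> = (\<Sum>x\<in>S. (if A x then 1 else 0) + (if B x then 1 else 0))"
    by (rule sum.cong) auto
  also have "\<dots> = card {x\<in>S. A x} + card {x\<in>S. B x}"
    using assms by (simp add: card_filter_sum sum.distrib)
  finally show ?thesis .
qed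

lemma card_Ind: "finite H \<Longrightarrow> int (card {x\<in>H. int x = a}) = Ind H a"
proof (cases "a \<in> int ` H")
  case True
  then obtain y where "y \<in> H" "a = int y" by auto
  then have "{x\<in>H. int x = a} = {y}" by auto
  then show ?thesis using True by (simp add: Ind_def)
next
  case False
  then have e: "{x\<in>H. int x = a} = {}" by auto
  show ?thesis unfolding e Ind_def using False by simp
qed

lemma final_arith: "(c::int) + 2*k = N + i1 + i2 + i3 \<Longrightarrow> (c mod 2) mod 2 = (N - i1 + i2 + i3) mod 2"
  by presburger

lemma Od_pm: "Od N = 1 \<or> Od N = -1" by (simp add: Od_def)

theorem proposition3p5:
  fixes R m h :: nat and lam mu :: "nat list"
  assumes "R \<ge> 1" and "m < 2 ^ R"
    and "is_partition mu m" and "is_partition lam (2 ^ R + m)"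
    and "parent_with_hook R lam mu h"
  shows "[eta R lam h = N_count R lam h - Ind (Hset lam) (int h - 2 ^ (R - 1))
            + Ind (Hset lam) (int h + 2 ^ (R - 1)) + Ind (Hset lam) (int h - 3 * 2 ^ (R - 1))] (mod 2)"
proof -
  define H where "H = Hset lam"
  define S where "S = H - {h}"
  define n :: int where "n = 2^R"
  define q :: int where "q = 2^(R-1)"
  have nq: "n = 2 * q" using assms(1) unfolding n_def q_def
    by (metis Suc_diff_1 less_le_trans zero_less_one power_Suc)
  have q0: "q > 0" by (simp add: q_def)
  have finH: "finite H" unfolding H_def Hset_def by simp
  have finS: "finite S" using finH by (simp add: S_def)
  have hH: "h \<in> H" and hn: "2^R \<le> h" and tH: "h - 2^R \<notin> H"
    using assms(5) unfolding parent_with_hook_def H_def by auto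
  have bnd: "int x < 2 * n" if "x \<in> H" for x
  proof -
    have "x \<le> 2^R + m" using Hbound[OF assms(4)] that unfolding H_def by blast
    then have "x < 2 * 2^R" using assms(2) by simp
    then have "int x < int (2 * 2^R)" by (simp only: of_nat_less_iff)
    then show ?thesis unfolding n_def by simp
  qed
  have hn': "n \<le> int h" proof -
    have "int (2^R) \<le> int h" using hn by (simp only: of_nat_le_iff)
    then show ?thesis unfolding n_def by simp
  qed
  define A where "A x = (0 < int h - int x \<and> int h - int x < n)" for x
  define B where "B x = (int h - int x = q \<or> int h - int x = - q \<or> int h - int x = 3 * q)" for x
  define f where "f x = Od (nat \<bar>int h - int x\<bar>) / Od (nat \<bar>int h - 2 ^ R - int x\<bar>)" for x
  have fx: "f x = (if A x then -1 else 1) * (if B x then -1 else 1)" if xS: "x \<in> S" for x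
  proof -
    have xH: "x \<in> H" and xh: "x \<noteq> h" using xS by (auto simp: S_def)
    have "x \<noteq> h - 2^R" using tH xH by auto
    have d1: "int h - int x \<noteq> n"
    proof
      assume a: "int h - int x = n"
      have "int (h - 2^R) = int h - int (2^R)" using hn by (rule of_nat_diff)
      then have "int (h - 2^R) = int x" using a unfolding n_def by simp
      then have "h - 2^R = x" by (simp only: of_nat_eq_iff)
      then show False using \<open>x \<noteq> h - 2^R\<close> by simp
    qed
    have b1: "int x < 2 * n" by (rule bnd[OF xH])
    have b2: "int h < 2 * n" by (rule bnd[OF hH])
    have d0: "int h - int x \<noteq> 0" using xh by simp
    have k: "Od (nat \<bar>int h - int x\<bar>) * Od (nat \<bar>int h - int x - 2^R\<bar>) =
      (if 0 < int h - int x \<and> int h - int x < 2^R then -1 else 1) *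
      (if int h - int x = 2^(R-1) \<or> int h - int x = -(2^(R-1)) \<or> int h - int x = 3*2^(R-1) then -1 else 1)"
    proof (rule key)
      show "1 \<le> R" by (rule assms(1))
      show "int h - int x \<noteq> 0" by (rule d0)
      show "int h - int x \<noteq> 2^R" using d1 unfolding n_def .
      show "-(2^R) < int h - int x" using b1 hn' unfolding n_def by linarith
      show "int h - int x < 2 * 2^R" using b2 unfolding n_def by linarith
    qed
    have e: "int h - 2^R - int x = int h - int x - 2^R" by simp
    have "f x = Od (nat \<bar>int h - int x\<bar>) * Od (nat \<bar>int h - int x - 2^R\<bar>)"
      using Od_pm[of "nat \<bar>int h - int x - 2^R\<bar>"] unfolding f_def e by auto
    then show ?thesis using k unfolding A_def B_def n_def q_def by simp
  qed
  have fpm: "\<forall>x\<in>S. f x = 1 \<or> f x = -1" using fx by auto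
  have fiff: "f x = -1 \<longleftrightarrow> A x \<noteq> B x" if "x \<in> S" for x
    using fx[OF that] by (cases "A x"; cases "B x") auto
  have setf: "{x\<in>S. f x = -1} = {x\<in>S. A x \<noteq> B x}" using fiff by auto
  define c where "c = card {x\<in>S. A x \<noteq> B x}"
  have ep: "eta_prod R lam h = (-1)^c"
    unfolding eta_prod_def c_def setf[symmetric] H_def[symmetric] S_def[symmetric] f_def[symmetric]
    by (rule prod_pm[OF finS fpm])
  have etac: "eta R lam h = int (c mod 2)"
  proof (cases "even c")
    case True then show ?thesis using ep by (simp add: eta_def)
  next
    case False then have "(-1::rat)^c = -1" by simp
    then show ?thesis using ep False by (simp add: eta_def odd_iff_mod_2_eq_one)
  qed
  have cx: "c + 2 * card {x\<in>S. A x \<and> B x} = card {x\<in>S. A x} + card {x\<in>S. B x}"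
    unfolding c_def by (rule card_xor[OF finS])
  have cA: "{x\<in>S. A x} = {y \<in> Hset lam. int h - 2 ^ R < int y \<and> y < h}"
    unfolding S_def H_def A_def n_def by auto
  have NA: "N_count R lam h = int (card {x\<in>S. A x})" unfolding N_count_def cA ..
  have cB: "{x\<in>S. B x} = {x\<in>H. int x = int h - q} \<union> {x\<in>H. int x = int h + q} \<union> {x\<in>H. int x = int h - 3*q}"
    unfolding S_def B_def using q0 by auto
  have "card {x\<in>S. B x} = card {x\<in>H. int x = int h - q} + card {x\<in>H. int x = int h + q} + card {x\<in>H. int x = int h - 3*q}"
    
  proof -
    have f1: "finite {x\<in>H. int x = int h - q}" "finite {x\<in>H. int x = int h + q}" "finite {x\<in>H. int x = int h - 3*q}"
      using finH by auto
    have "card ({x\<in>H. int x = int h - q} \<union> {x\<in>H. int x = int h + q} \<union> {x\<in>H. int x = int h - 3*q})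
      = card ({x\<in>H. int x = int h - q} \<union> {x\<in>H. int x = int h + q}) + card {x\<in>H. int x = int h - 3*q}"
      by (rule card_Un_disjoint) (use f1 q0 in auto)
    also have "card ({x\<in>H. int x = int h - q} \<union> {x\<in>H. int x = int h + q}) = card {x\<in>H. int x = int h - q} + card {x\<in>H. int x = int h + q}"
      by (rule card_Un_disjoint) (use f1 q0 in auto)
    finally show ?thesis unfolding cB .
  qed
  then have IB: "int (card {x\<in>S. B x}) = Ind H (int h - q) + Ind H (int h + q) + Ind H (int h - 3*q)"
    using card_Ind[OF finH] by simp
  have "int c + 2 * int (card {x\<in>S. A x \<and> B x}) = N_count R lam h + Ind H (int h - q) + Ind H (int h + q) + Ind H (int h - 3*q)"
    
  proof -
    have "int (c + 2 * card {x\<in>S. A x \<and> B x}) = int (card {x\<in>S. A x} + card {x\<in>S. B x})"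
      using cx by (simp only:)
    then show ?thesis using NA IB by linarith
  qed
  then have "(int c mod 2) mod 2 = (N_count R lam h - Ind H (int h - q) + Ind H (int h + q) + Ind H (int h - 3*q)) mod 2"
    by (rule final_arith)
  moreover have "int (c mod 2) = int c mod 2" by (simp add: zmod_int)
  ultimately show ?thesis unfolding cong_def etac H_def q_def by simp
qed

end
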